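(* Let $A,B\in\mathcal{M}_n$, let $\psi\colon H^*(M(A);\mathbb{Z})\to H^*(M(B);\mathbb{Z})$ be a graded ring isomorphism (also denoting its rationalization by $\psi$), and let $\sigma$ be a permutation of $\{1,\dots,n\}$ and $q_1,\dots,q_n$ nonzero rationals with $\psi(y^A_j)=q_jy^B_{\sigma(j)}$ for all $j$. Suppose $q_j=\pm\tfrac12$ for some $j$. Then there are $i<j$ and $c\in\mathbb{Z}\setminus\{0\}$ such that $\alpha^A_j=cy^A_i$. If $\alpha^A_j$ is not of even exceptional type, then $c$ is odd and $q_i=\pm2$. If neither $\alpha^A_j$ nor $\alpha^B_{\sigma(i)}$ is of even exceptional type, then $\alpha^B_{\sigma(i)}=d\,y^B_{\sigma(j)}$ for some odd integer $d$.
   Context: Let $\mathcal{M}_n$ be the set of integral strictly upper triangular $n\times n$ matrices $A=(A^i_j)$ ($A^i_j$ is the $(i,j)$ entry, and $A^i_j=0$ for $i\ge j$). For $A\in\mathcal{M}_n$, $M(A)$ denotes the Bott manifold obtained as the quotient of $(S^3)^n$ ($S^3\subset\mathbb{C}^2$ the unit sphere) by the free $(S^1)^n$-action $(g_1,\dots,g_n)\cdot((z_1,w_1),\dots,(z_n,w_n))=\big(((\prod_{k<j}g_k^{-A^k_j})g_jz_j,\ g_jw_j)\big)_{j=1}^n$. Let $x^A_j\in H^2(M(A);\mathbb{Z})$ be the first Chern class of the line bundle obtained as the quotient of $(S^3)^n\times\mathbb{C}$ where $g$ acts on the $\mathbb{C}$-factor by $g_j^{-1}$. Put $\alpha^A_j=\sum_{i<j}A^i_jx^A_i$.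 Then $H^*(M(A);\mathbb{Z})=\mathbb{Z}[x^A_1,\dots,x^A_n]/((x^A_j)^2-\alpha^A_jx^A_j\mid j=1,\dots,n)$. Define $y^A_j=x^A_j-\tfrac12\alpha^A_j\in H^2(M(A);\mathbb{Q})$. The same notation is used for $B$. We say $\alpha^A_j$ is of exceptional type if $\alpha^A_j=cy^A_i$ for some nonzero integer $c$ and some $i<j$, and of even exceptional type if moreover this integer $c$ is even. *)

theory Defs
  imports Complex_Main "HOL-Library.Poly_Mapping" "HOL-Combinatorics.Permutations"
begin

text \<open>Integral strictly upper triangular n x n matrices (0-based indices; entry (i,j) is A i j).\<close>
definition su_matrix :: "nat \<Rightarrow> (nat \<Rightarrow> nat \<Rightarrow> int) \<Rightarrow> bool" where
  "su_matrix n A \<longleftrightarrow> (\<forall>i j. A i j \<noteq> 0 \<longrightarrow> i < j \<and> j < n)"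

text \<open>Integral polynomials in the variables x_0, x_1, ... (monomials = exponent maps).\<close>
type_synonym ipoly = "(nat \<Rightarrow>\<^sub>0 nat) \<Rightarrow>\<^sub>0 int"

definition pconst :: "int \<Rightarrow> ipoly" where
  "pconst c = Poly_Mapping.single 0 c"

definition mvar :: "nat \<Rightarrow> ipoly" where
  "mvar i = Poly_Mapping.single (Poly_Mapping.single i 1) 1"

definition in_vars :: "nat \<Rightarrow> ipoly \<Rightarrow> bool" where
  "in_vars n p \<longleftrightarrow> (\<forall>m \<in> Poly_Mapping.keys p. \<forall>i \<in> Poly_Mapping.keys m. i < n)"

definition alphaP :: "(nat \<Rightarrow> nat \<Rightarrow> int) \<Rightarrow> nat \<Rightarrow> ipoly" where
  "alphaP A j = (\<Sum>i<j. pconst (A i j) * mvar i)"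

definition bott_rel :: "(nat \<Rightarrow> nat \<Rightarrow> int) \<Rightarrow> nat \<Rightarrow> ipoly" where
  "bott_rel A j = mvar j * mvar j - alphaP A j * mvar j"

definition bott_ideal :: "nat \<Rightarrow> (nat \<Rightarrow> nat \<Rightarrow> int) \<Rightarrow> ipoly set" where
  "bott_ideal n A = {(\<Sum>j<n. f j * bott_rel A j) | f. \<forall>j<n. in_vars n (f j)}"

text \<open>Equality in H^*(M(A);Z) = Z[x_0..x_(n-1)] / bott_ideal of representatives.\<close>
definition hcong :: "nat \<Rightarrow> (nat \<Rightarrow> nat \<Rightarrow> int) \<Rightarrow> ipoly \<Rightarrow> ipoly \<Rightarrow> bool" where
  "hcong n A p q \<longleftrightarrow> p - q \<in> bott_ideal n A"

definition psubst :: "(nat \<Rightarrow> ipoly) \<Rightarrow> ipoly \<Rightarrow> ipoly" where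
  "psubst L p = (\<Sum>m \<in> Poly_Mapping.keys p.
      pconst (Poly_Mapping.lookup p m) * (\<Prod>i \<in> Poly_Mapping.keys m. L i ^ Poly_Mapping.lookup m i))"

text \<open>Linear form sum_(k<n) P i k x_k: image of the generator x_i^A in H^2(M(B)).\<close>
definition lin_img :: "nat \<Rightarrow> (nat \<Rightarrow> nat \<Rightarrow> int) \<Rightarrow> nat \<Rightarrow> ipoly" where
  "lin_img n P i = (\<Sum>k<n. pconst (P i k) * mvar k)"

text \<open>A graded ring homomorphism H^*(M(A)) -> H^*(M(B)) is determined by the images of the
  degree-2 generators x_i^A, which are classes in H^2(M(B);Z), free with basis x_k^B; it is the map
  induced by substituting x_i := sum_k P i k x_k. The predicate says this substitution induces a
  well-defined, injective and surjective map of the quotient rings, i.e. a graded ring isomorphism.\<close>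
definition bott_graded_iso ::
  "nat \<Rightarrow> (nat \<Rightarrow> nat \<Rightarrow> int) \<Rightarrow> (nat \<Rightarrow> nat \<Rightarrow> int) \<Rightarrow> (nat \<Rightarrow> nat \<Rightarrow> int) \<Rightarrow> bool" where
  "bott_graded_iso n A B P \<longleftrightarrow>
     (\<forall>p q. in_vars n p \<longrightarrow> in_vars n q \<longrightarrow>
        (hcong n A p q \<longleftrightarrow> hcong n B (psubst (lin_img n P) p) (psubst (lin_img n P) q))) \<and>
     (\<forall>q. in_vars n q \<longrightarrow> (\<exists>p. in_vars n p \<and> hcong n B (psubst (lin_img n P) p) q))"

text \<open>Degree-2 rational classes, as coefficient vectors w.r.t. the basis x_0..x_(n-1) of
  H^2(M(A);Q) (only entries k < n are meaningful).\<close>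
definition alphaV :: "(nat \<Rightarrow> nat \<Rightarrow> int) \<Rightarrow> nat \<Rightarrow> nat \<Rightarrow> rat" where
  "alphaV A j = (\<lambda>k. if k < j then of_int (A k j) else 0)"

definition yV :: "(nat \<Rightarrow> nat \<Rightarrow> int) \<Rightarrow> nat \<Rightarrow> nat \<Rightarrow> rat" where
  "yV A j = (\<lambda>k. (if k = j then 1 else 0) - alphaV A j k / 2)"

definition eqV :: "nat \<Rightarrow> (nat \<Rightarrow> rat) \<Rightarrow> (nat \<Rightarrow> rat) \<Rightarrow> bool" where
  "eqV n v w \<longleftrightarrow> (\<forall>k<n. v k = w k)"

text \<open>Rationalization of psi on degree 2: x_i maps to sum_k P i k x_k.\<close>
definition psiV :: "nat \<Rightarrow> (nat \<Rightarrow> nat \<Rightarrow> int) \<Rightarrow> (nat \<Rightarrow> rat) \<Rightarrow> nat \<Rightarrow> rat" where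
  "psiV n P v = (\<lambda>k. \<Sum>i<n. v i * of_int (P i k))"

definition scaleV :: "rat \<Rightarrow> (nat \<Rightarrow> rat) \<Rightarrow> nat \<Rightarrow> rat" where
  "scaleV c v = (\<lambda>k. c * v k)"

definition exc_with :: "nat \<Rightarrow> (nat \<Rightarrow> nat \<Rightarrow> int) \<Rightarrow> nat \<Rightarrow> int \<Rightarrow> nat \<Rightarrow> bool" where
  "exc_with n A j c i \<longleftrightarrow> i < j \<and> c \<noteq> 0 \<and> eqV n (alphaV A j) (scaleV (of_int c) (yV A i))"

definition even_exceptional :: "nat \<Rightarrow> (nat \<Rightarrow> nat \<Rightarrow> int) \<Rightarrow> nat \<Rightarrow> bool" where
  "even_exceptional n A j \<longleftrightarrow> (\<exists>c i. exc_with n A j c i \<and> even c)"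

end

theory Submission
  imports Defs "HOL-Computational_Algebra.Polynomial"
begin

definition monv :: "(nat \<Rightarrow> rat) \<Rightarrow> (nat \<Rightarrow>\<^sub>0 nat) \<Rightarrow> rat" where
  "monv z m = (\<Prod>i\<in>Poly_Mapping.keys m. z i ^ Poly_Mapping.lookup m i)"

definition ev :: "(nat \<Rightarrow> rat) \<Rightarrow> ipoly \<Rightarrow> rat" where
  "ev z p = (\<Sum>m\<in>Poly_Mapping.keys p. of_int (Poly_Mapping.lookup p m) * monv z m)"

lemma monv_superset:
  assumes "finite S" "Poly_Mapping.keys m \<subseteq> S"
  shows "monv z m = (\<Prod>i\<in>S. z i ^ Poly_Mapping.lookup m i)"
  unfolding monv_def
  by (rule prod.mono_neutral_left) (use assms in \<open>auto simp: in_keys_iff\<close>)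

lemma monv_add: "monv z (a + b) = monv z a * monv z b"
proof -
  let ?S = "Poly_Mapping.keys a \<union> Poly_Mapping.keys b"
  have "monv z (a+b) = (\<Prod>i\<in>?S. z i ^ Poly_Mapping.lookup (a+b) i)"
    by (rule monv_superset) (auto dest: set_mp[OF keys_add])
  also have "\<dots> = (\<Prod>i\<in>?S. z i ^ Poly_Mapping.lookup a i) * (\<Prod>i\<in>?S. z i ^ Poly_Mapping.lookup b i)"
    by (simp add: lookup_add power_add prod.distrib)
  also have "\<dots> = monv z a * monv z b"
    using monv_superset[of ?S a z] monv_superset[of ?S b z] by simp
  finally show ?thesis .
qed

lemma monv_zero [simp]: "monv z 0 = 1"
  by (simp add: monv_def)

lemma ev_superset:
  assumes "finite S" "Poly_Mapping.keys p \<subseteq> S"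
  shows "ev z p = (\<Sum>m\<in>S. of_int (Poly_Mapping.lookup p m) * monv z m)"
  unfolding ev_def
  by (rule sum.mono_neutral_left) (use assms in \<open>auto simp: in_keys_iff\<close>)

lemma ev_add: "ev z (p + q) = ev z p + ev z q"
proof -
  let ?S = "Poly_Mapping.keys p \<union> Poly_Mapping.keys q"
  have "ev z (p+q) = (\<Sum>m\<in>?S. of_int (Poly_Mapping.lookup (p+q) m) * monv z m)"
    by (rule ev_superset) (auto dest: set_mp[OF keys_add])
  also have "\<dots> = (\<Sum>m\<in>?S. of_int (Poly_Mapping.lookup p m) * monv z m) + (\<Sum>m\<in>?S. of_int (Poly_Mapping.lookup q m) * monv z m)"
    by (simp add: lookup_add distrib_right sum.distrib)
  also have "\<dots> = ev z p + ev z q"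
    using ev_superset[of ?S p z] ev_superset[of ?S q z] by simp
  finally show ?thesis .
qed

lemma ev_zero [simp]: "ev z 0 = 0"
  by (simp add: ev_def)

lemma ev_uminus: "ev z (- p) = - ev z p"
  by (simp add: ev_def sum_negf)

lemma ev_diff: "ev z (p - q) = ev z p - ev z q"
  using ev_add[of z p "-q"] by (simp add: ev_uminus)

lemma ev_sum: "ev z (sum f A) = (\<Sum>a\<in>A. ev z (f a))"
  by (induction A rule: infinite_finite_induct) (auto simp: ev_add)

lemma ev_single: "ev z (Poly_Mapping.single m c) = of_int c * monv z m"
  by (simp add: ev_def)

lemma sum_single_keys: "p = (\<Sum>m\<in>Poly_Mapping.keys p. Poly_Mapping.single m (Poly_Mapping.lookup p m))"
  by (rule poly_mapping_eqI)
     (auto simp: lookup_sum lookup_single when_def in_keys_iff intro: sym)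

lemma ev_mult: "ev z (p * q) = ev z p * ev z q"
proof -
  have "p * q = (\<Sum>a\<in>Poly_Mapping.keys p. \<Sum>b\<in>Poly_Mapping.keys q.
     Poly_Mapping.single (a + b) (Poly_Mapping.lookup p a * Poly_Mapping.lookup q b))"
    apply (subst sum_single_keys[of p])
    apply (subst sum_single_keys[of q])
    apply (simp add: sum_distrib_left sum_distrib_right mult_single)
    apply (rule sum.swap)
    done
  then have "ev z (p*q) = (\<Sum>a\<in>Poly_Mapping.keys p. \<Sum>b\<in>Poly_Mapping.keys q.
     of_int (Poly_Mapping.lookup p a) * monv z a * (of_int (Poly_Mapping.lookup q b) * monv z b))"
    by (simp add: ev_sum ev_single monv_add mult_ac)
  also have "\<dots> = ev z p * ev z q"
    by (simp add: ev_def sum_distrib_left sum_distrib_right) (rule sum.swap)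
  finally show ?thesis .
qed

lemma ev_one [simp]: "ev z 1 = 1"
  by (simp add: ev_def)

lemma ev_prod: "ev z (prod f A) = (\<Prod>a\<in>A. ev z (f a))"
  by (induction A rule: infinite_finite_induct) (auto simp: ev_mult)

lemma ev_power: "ev z (p ^ k) = ev z p ^ k"
  by (induction k) (auto simp: ev_mult)

lemma ev_pconst [simp]: "ev z (pconst c) = of_int c"
  by (simp add: pconst_def ev_single)

lemma ev_mvar [simp]: "ev z (mvar i) = z i"
  by (simp add: mvar_def ev_single monv_def)

definition monP :: "(nat \<Rightarrow> ipoly) \<Rightarrow> (nat \<Rightarrow>\<^sub>0 nat) \<Rightarrow> ipoly" where
  "monP L m = (\<Prod>i\<in>Poly_Mapping.keys m. L i ^ Poly_Mapping.lookup m i)"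

lemma pconst_zero [simp]: "pconst 0 = 0"
  by (simp add: pconst_def)

lemma pconst_add: "pconst (a + b) = pconst a + pconst b"
  by (simp add: pconst_def single_add)

lemma pconst_mult: "pconst (a * b) = pconst a * pconst b"
  by (simp add: pconst_def mult_single)

lemma pconst_uminus: "pconst (- a) = - pconst a"
  by (simp add: pconst_def single_uminus)

lemma pconst_sum: "pconst (sum f A) = (\<Sum>a\<in>A. pconst (f a))"
  by (induction A rule: infinite_finite_induct) (auto simp: pconst_add)

lemma psubst_monP: "psubst L p = (\<Sum>m\<in>Poly_Mapping.keys p. pconst (Poly_Mapping.lookup p m) * monP L m)"
  by (simp add: psubst_def monP_def)

lemma psubst_superset:
  assumes "finite S" "Poly_Mapping.keys p \<subseteq> S"
  shows "psubst L p = (\<Sum>m\<in>S. pconst (Poly_Mapping.lookup p m) * monP L m)"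
  unfolding psubst_monP
  by (rule sum.mono_neutral_left) (use assms in \<open>auto simp: in_keys_iff\<close>)

lemma psubst_add: "psubst L (p + q) = psubst L p + psubst L q"
proof -
  let ?S = "Poly_Mapping.keys p \<union> Poly_Mapping.keys q"
  have "psubst L (p+q) = (\<Sum>m\<in>?S. pconst (Poly_Mapping.lookup (p+q) m) * monP L m)"
    by (rule psubst_superset) (auto dest: set_mp[OF keys_add])
  also have "\<dots> = (\<Sum>m\<in>?S. pconst (Poly_Mapping.lookup p m) * monP L m) + (\<Sum>m\<in>?S. pconst (Poly_Mapping.lookup q m) * monP L m)"
    by (simp add: lookup_add pconst_add distrib_right sum.distrib)
  also have "\<dots> = psubst L p + psubst L q"
    using psubst_superset[of ?S p L] psubst_superset[of ?S q L] by simp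
  finally show ?thesis .
qed

lemma psubst_zero [simp]: "psubst L 0 = 0"
  by (simp add: psubst_def)

lemma psubst_sum: "psubst L (sum f A) = (\<Sum>a\<in>A. psubst L (f a))"
  by (induction A rule: infinite_finite_induct) (auto simp: psubst_add)

lemma psubst_single: "psubst L (Poly_Mapping.single m c) = pconst c * monP L m"
  by (simp add: psubst_monP)

lemma pconst_mvar: "pconst a * mvar i = Poly_Mapping.single (Poly_Mapping.single i 1) a"
  by (simp add: pconst_def mvar_def mult_single)

lemma monP_single: "monP L (Poly_Mapping.single i 1) = L i"
  by (simp add: monP_def)

lemma psubst_lin: "psubst L (pconst a * mvar i) = pconst a * L i"
  by (simp add: pconst_mvar psubst_single monP_def)


lemma in_vars_zero [simp]: "in_vars n 0"
  by (simp add: in_vars_def)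

lemma in_vars_pconst [simp]: "in_vars n (pconst c)"
  by (simp add: in_vars_def pconst_def)

lemma in_vars_mvar: "i < n \<Longrightarrow> in_vars n (mvar i)"
  by (simp add: in_vars_def mvar_def)

lemma in_vars_add: "in_vars n p \<Longrightarrow> in_vars n q \<Longrightarrow> in_vars n (p + q)"
  unfolding in_vars_def using keys_add[of p q] by blast

lemma in_vars_uminus: "in_vars n p \<Longrightarrow> in_vars n (- p)"
  unfolding in_vars_def by (simp only: keys_minus)

lemma in_vars_diff: "in_vars n p \<Longrightarrow> in_vars n q \<Longrightarrow> in_vars n (p - q)"
  unfolding in_vars_def using keys_diff[of p q] by blast

lemma in_vars_mult: "in_vars n p \<Longrightarrow> in_vars n q \<Longrightarrow> in_vars n (p * q)"
  unfolding in_vars_def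
proof (intro ballI)
  fix m i
  assume p: "\<forall>m\<in>Poly_Mapping.keys p. \<forall>i\<in>Poly_Mapping.keys m. i < n"
    and q: "\<forall>m\<in>Poly_Mapping.keys q. \<forall>i\<in>Poly_Mapping.keys m. i < n"
    and m: "m \<in> Poly_Mapping.keys (p * q)" and i: "i \<in> Poly_Mapping.keys m"
  from set_mp[OF keys_mult m] obtain a b where ab: "m = a + b" "a \<in> Poly_Mapping.keys p" "b \<in> Poly_Mapping.keys q"
    by blast
  from i ab(1) have "i \<in> Poly_Mapping.keys a \<union> Poly_Mapping.keys b"
    using keys_add[of a b] by blast
  then show "i < n"
  proof
    assume "i \<in> Poly_Mapping.keys a" then show ?thesis using p ab(2) by blast
  next
    assume "i \<in> Poly_Mapping.keys b" then show ?thesis using q ab(3) by blast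
  qed
qed

lemma in_vars_sum: "(\<And>a. a \<in> A \<Longrightarrow> in_vars n (f a)) \<Longrightarrow> in_vars n (sum f A)"
  by (induction A rule: infinite_finite_induct) (auto intro: in_vars_add)

lemma ev_psubst': "ev z (psubst L p) = ev (\<lambda>i. ev z (L i)) p"
  unfolding psubst_def ev_sum ev_mult ev_prod ev_power ev_pconst
  by (simp add: ev_def monv_def)

definition deg :: "(nat \<Rightarrow>\<^sub>0 nat) \<Rightarrow> nat" where
  "deg m = (\<Sum>i\<in>Poly_Mapping.keys m. Poly_Mapping.lookup m i)"

lemma monv_scale: "monv (\<lambda>i. t * z i) m = t ^ deg m * monv z m"
  unfolding monv_def deg_def power_mult_distrib prod.distrib power_sum ..

definition tpoly :: "(nat \<Rightarrow> rat) \<Rightarrow> ipoly \<Rightarrow> rat poly" where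
  "tpoly z p = (\<Sum>m\<in>Poly_Mapping.keys p. monom (of_int (Poly_Mapping.lookup p m) * monv z m) (deg m))"

lemma poly_tpoly: "poly (tpoly z p) t = ev (\<lambda>i. t * z i) p"
  unfolding tpoly_def ev_def poly_sum poly_monom monv_scale
  by (simp add: mult_ac)

lemma tpoly_eq: "(\<And>t. ev (\<lambda>i. t * z i) p = poly h t) \<Longrightarrow> tpoly z p = h"
  using poly_eq_poly_eq_iff[of "tpoly z p" h] by (auto simp: poly_tpoly)

definition relv :: "(nat \<Rightarrow> nat \<Rightarrow> int) \<Rightarrow> nat \<Rightarrow> (nat \<Rightarrow> rat) \<Rightarrow> rat" where
  "relv B k z = z k ^ 2 - (\<Sum>i<k. of_int (B i k) * z i) * z k"

lemma ev_alphaP: "ev z (alphaP B k) = (\<Sum>i<k. of_int (B i k) * z i)"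
  by (simp add: alphaP_def ev_sum ev_mult)

lemma ev_bott_rel: "ev z (bott_rel B k) = relv B k z"
  by (simp add: bott_rel_def relv_def ev_diff ev_mult ev_alphaP power2_eq_square)

lemma relv_scale: "relv B k (\<lambda>i. t * z i) = t^2 * relv B k z"
  by (simp add: relv_def power2_eq_square sum_distrib_left algebra_simps)

lemma ideal_tpoly:
  assumes "E \<in> bott_ideal n B"
  shows "\<exists>f. \<forall>z. tpoly z E = (\<Sum>k<n. monom (relv B k z) 2 * tpoly z (f k))"
proof -
  from assms obtain f where E: "E = (\<Sum>j<n. f j * bott_rel B j)"
    unfolding bott_ideal_def by blast
  have "tpoly z E = (\<Sum>k<n. monom (relv B k z) 2 * tpoly z (f k))" for z
  proof (rule tpoly_eq)
    fix t
    show "ev (\<lambda>i. t * z i) E = poly (\<Sum>k<n. monom (relv B k z) 2 * tpoly z (f k)) t"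
      by (simp add: E ev_sum ev_mult ev_bott_rel relv_scale poly_sum poly_monom poly_tpoly mult_ac)
  qed
  then show ?thesis by blast
qed

lemma coeff_ideal_sum:
  "coeff (\<Sum>k<n. monom (r k) 2 * h k) 0 = 0"
  "coeff (\<Sum>k<n. monom (r k) 2 * h k) 1 = 0"
  "coeff (\<Sum>k<n. monom (r k) 2 * h k) 2 = (\<Sum>k<n. r k * coeff (h k) 0)"
  by (simp_all add: coeff_sum coeff_monom_mult)

lemma coeff_tpoly_0: "coeff (tpoly z f) 0 = ev (\<lambda>_. 0) f"
  using poly_tpoly[of z f 0] by (simp add: poly_0_coeff_0)

lemma ideal_quad:
  assumes "E \<in> bott_ideal n B" and hom: "\<And>t z. ev (\<lambda>i. t * z i) E = t^2 * ev z E"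
  shows "\<exists>c. \<forall>z. ev z E = (\<Sum>k<n. c k * relv B k z)"
proof -
  from ideal_tpoly[OF assms(1)] obtain f where f: "\<And>z. tpoly z E = (\<Sum>k<n. monom (relv B k z) 2 * tpoly z (f k))"
    by blast
  have "ev z E = (\<Sum>k<n. ev (\<lambda>_. 0) (f k) * relv B k z)" for z
  proof -
    have "tpoly z E = monom (ev z E) 2"
      by (rule tpoly_eq) (simp add: hom poly_monom mult_ac)
    then have "ev z E = coeff (tpoly z E) 2" by simp
    also have "\<dots> = (\<Sum>k<n. relv B k z * ev (\<lambda>_. 0) (f k))"
      by (simp only: f coeff_ideal_sum coeff_tpoly_0)
    finally show ?thesis by (simp add: mult_ac)
  qed
  then show ?thesis by (intro exI[of _ "\<lambda>k. ev (\<lambda>_. 0) (f k)"]) blast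
qed

lemma ideal_lin:
  assumes "E \<in> bott_ideal n B" and hom: "\<And>t z. ev (\<lambda>i. t * z i) E = t * ev z E"
  shows "ev z E = 0"
proof -
  from ideal_tpoly[OF assms(1)] obtain f where f: "\<And>z. tpoly z E = (\<Sum>k<n. monom (relv B k z) 2 * tpoly z (f k))"
    by blast
  have "tpoly z E = monom (ev z E) 1"
    by (rule tpoly_eq) (simp add: hom poly_monom mult_ac)
  then have "ev z E = coeff (tpoly z E) 1" by simp
  also have "\<dots> = 0"
    by (simp only: f coeff_ideal_sum)
  finally show ?thesis .
qed

lemma deg_single1 [simp]: "deg (Poly_Mapping.single k (1::nat)) = 1"
  by (simp add: deg_def)

lemma deg_eq_1:
  assumes "deg m = 1" shows "\<exists>k. m = Poly_Mapping.single k 1"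
proof -
  have fin: "finite (Poly_Mapping.keys m)" by simp
  have "card (Poly_Mapping.keys m) = (\<Sum>i\<in>Poly_Mapping.keys m. (1::nat))" by simp
  also have "\<dots> \<le> deg m" unfolding deg_def
    by (rule sum_mono) (simp add: in_keys_iff)
  finally have c: "card (Poly_Mapping.keys m) \<le> 1" using assms by simp
  have "Poly_Mapping.keys m \<noteq> {}" using assms by (auto simp: deg_def)
  then have "card (Poly_Mapping.keys m) \<noteq> 0" using fin by simp
  then have "card (Poly_Mapping.keys m) = 1" using c by linarith
  then obtain k where k: "Poly_Mapping.keys m = {k}" by (rule card_1_singletonE)
  then have "Poly_Mapping.lookup m k = 1" using assms by (simp add: deg_def)
  then have "m = Poly_Mapping.single k 1"
  proof (intro poly_mapping_eqI)
    fix i show "Poly_Mapping.lookup m i = Poly_Mapping.lookup (Poly_Mapping.single k 1) i"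
    proof (cases "i = k")
      case True then show ?thesis using \<open>Poly_Mapping.lookup m k = 1\<close> by simp
    next
      case False
      then have "i \<notin> Poly_Mapping.keys m" using k by simp
      then show ?thesis using False by (simp add: in_keys_iff lookup_single_not_eq)
    qed
  qed
  then show ?thesis by blast
qed

lemma coeff_tpoly_1:
  assumes "in_vars n p"
  shows "coeff (tpoly w p) 1 = (\<Sum>k<n. of_int (Poly_Mapping.lookup p (Poly_Mapping.single k 1)) * w k)"
proof -
  let ?a = "\<lambda>m. of_int (Poly_Mapping.lookup p m) * monv w m"
  let ?K = "{k. k < n \<and> Poly_Mapping.single k 1 \<in> Poly_Mapping.keys p}"
  have "coeff (tpoly w p) 1 = (\<Sum>m\<in>Poly_Mapping.keys p. if deg m = 1 then ?a m else 0)"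
    by (simp add: tpoly_def coeff_sum coeff_monom)
  also have "\<dots> = (\<Sum>m\<in>{m\<in>Poly_Mapping.keys p. deg m = 1}. ?a m)"
    by (simp add: sum.inter_filter)
  also have "{m\<in>Poly_Mapping.keys p. deg m = 1} = (\<lambda>k. Poly_Mapping.single k 1) ` ?K"
  proof
    show "{m \<in> Poly_Mapping.keys p. deg m = 1} \<subseteq> (\<lambda>k. Poly_Mapping.single k 1) ` ?K"
    proof
      fix m assume m: "m \<in> {m \<in> Poly_Mapping.keys p. deg m = 1}"
      then obtain k where k: "m = Poly_Mapping.single k 1" using deg_eq_1 by blast
      have "k \<in> Poly_Mapping.keys m" using k by simp
      then have "k < n" using assms m unfolding in_vars_def by blast
      then show "m \<in> (\<lambda>k. Poly_Mapping.single k 1) ` ?K" using m k by blast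
    qed
  qed (auto simp: deg_def)
  also have "(\<Sum>m\<in>(\<lambda>k. Poly_Mapping.single k 1) ` ?K. ?a m) = (\<Sum>k\<in>?K. ?a (Poly_Mapping.single k 1))"
  proof (rule sum.reindex[unfolded comp_def])
    show "inj_on (\<lambda>k. Poly_Mapping.single k (1::nat)) ?K"
      by (rule inj_onI) (metis lookup_single_eq lookup_single_not_eq zero_neq_one)
  qed
  also have "\<dots> = (\<Sum>k\<in>?K. of_int (Poly_Mapping.lookup p (Poly_Mapping.single k 1)) * w k)"
    by (simp add: monv_def)
  also have "\<dots> = (\<Sum>k<n. of_int (Poly_Mapping.lookup p (Poly_Mapping.single k 1)) * w k)"
    by (rule sum.mono_neutral_left) (auto simp: in_keys_iff)
  finally show ?thesis .
qed

lemma ev_lin_img: "ev z (lin_img n P i) = (\<Sum>k<n. of_int (P i k) * z k)"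
  by (simp add: lin_img_def ev_sum ev_mult)

lemma in_vars_alphaP: "j \<le> n \<Longrightarrow> in_vars n (alphaP A j)"
  unfolding alphaP_def by (intro in_vars_sum in_vars_mult in_vars_pconst in_vars_mvar) auto

lemma surj_vec:
  assumes iso: "bott_graded_iso n A B P" and L: "L < n"
  shows "\<exists>u::nat\<Rightarrow>int. \<forall>k'<n. psiV n P (\<lambda>k. of_int (u k)) k' = 2 * yV B L k'"
proof -
  define tq where "tq = pconst 2 * mvar L - alphaP B L"
  have tqv: "in_vars n tq" unfolding tq_def
    using L by (intro in_vars_diff in_vars_mult in_vars_alphaP in_vars_mvar) auto
  from iso tqv obtain p where p: "in_vars n p" "hcong n B (psubst (lin_img n P) p) tq"
    unfolding bott_graded_iso_def by blast
  define E where "E = psubst (lin_img n P) p - tq"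
  have E: "E \<in> bott_ideal n B" using p(2) by (simp add: hcong_def E_def)
  from ideal_tpoly[OF E] obtain f where f: "\<And>z. tpoly z E = (\<Sum>k<n. monom (relv B k z) 2 * tpoly z (f k))"
    by blast
  have evtq: "ev z tq = 2 * z L - (\<Sum>i<L. of_int (B i L) * z i)" for z
    by (simp add: tq_def ev_diff ev_mult ev_alphaP)
  define u where "u k = Poly_Mapping.lookup p (Poly_Mapping.single k 1)" for k
  have key: "(\<Sum>k<n. of_int (u k) * ev z (lin_img n P k)) = ev z tq" for z
  proof -
    let ?l = "\<lambda>i. ev z (lin_img n P i)"
    have "tpoly z E = tpoly ?l p - monom (ev z tq) 1"
    proof (rule tpoly_eq)
      fix t
      have "ev (\<lambda>i. t * z i) (lin_img n P k) = t * ?l k" for k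
        by (simp add: ev_lin_img sum_distrib_left mult_ac)
      then show "ev (\<lambda>i. t * z i) E = poly (tpoly ?l p - monom (ev z tq) 1) t"
        by (simp add: E_def ev_diff ev_psubst' poly_tpoly poly_monom evtq algebra_simps sum_distrib_left)
    qed
    then have "coeff (tpoly ?l p) 1 - ev z tq = coeff (tpoly z E) 1" by simp
    also have "\<dots> = 0" by (simp only: f coeff_ideal_sum)
    finally show ?thesis using coeff_tpoly_1[OF p(1), of ?l] by (simp add: u_def)
  qed
  have "psiV n P (\<lambda>k. of_int (u k)) k' = 2 * yV B L k'" if k': "k' < n" for k'
  proof -
    define z where "z = (\<lambda>i. if i = k' then (1::rat) else 0)"
    have "psiV n P (\<lambda>k. of_int (u k)) k' = (\<Sum>k<n. of_int (u k) * ev z (lin_img n P k))"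
      unfolding psiV_def ev_lin_img z_def using k' by (simp add: if_distrib cong: if_cong)
    also have "\<dots> = ev z tq" by (rule key)
    also have "\<dots> = 2 * yV B L k'"
      unfolding evtq z_def yV_def alphaV_def by (auto simp: if_distrib cong: if_cong)
    finally show ?thesis .
  qed
  then show ?thesis by blast
qed

lemma common_denom:
  fixes v :: "nat \<Rightarrow> rat"
  shows "\<exists>N::int. N > 0 \<and> (\<forall>i<n. \<exists>w::int. of_int N * v i = of_int w)"
proof (induction n)
  case 0 then show ?case by (intro exI[of _ 1]) simp
next
  case (Suc n)
  then obtain N where N: "N > 0" "\<forall>i<n. \<exists>w::int. of_int N * v i = of_int w" by blast
  obtain a b where ab: "quotient_of (v n) = (a, b)" by (cases "quotient_of (v n)")
  then have vb: "v n = of_int a / of_int b" and b: "b > 0"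
    by (simp_all add: quotient_of_div quotient_of_denom_pos)
  show ?case
  proof (rule exI[of _ "N * b"], intro conjI allI impI)
    show "N * b > 0" using N b by simp
    fix i assume "i < Suc n"
    then consider "i < n" | "i = n" by linarith
    then show "\<exists>w::int. of_int (N * b) * v i = of_int w"
    proof cases
      case 1
      then obtain w where "of_int N * v i = of_int w" using N by blast
      then have "of_int (N * b) * v i = of_int (w * b)" by (simp add: algebra_simps)
      then show ?thesis by blast
    next
      case 2
      have "of_int (N * b) * v i = of_int (N * a)" using 2 vb b by simp
      then show ?thesis by blast
    qed
  qed
qed

lemma zero_in_ideal: "0 \<in> bott_ideal n B"
  unfolding bott_ideal_def by (rule CollectI, rule exI[of _ "\<lambda>_. 0"]) simp

lemma inj_vec:
  assumes iso: "bott_graded_iso n A B P" and h: "\<forall>k<n. psiV n P v k = 0"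
  shows "\<forall>i<n. v i = 0"
proof -
  obtain N::int where N: "N > 0" "\<forall>i<n. \<exists>w::int. of_int N * v i = of_int w"
    using common_denom by blast
  then obtain w where w: "\<forall>i<n. of_int N * v i = of_int (w i)" by metis
  define p where "p = (\<Sum>i<n. pconst (w i) * mvar i)"
  have pv: "in_vars n p" unfolding p_def
    by (intro in_vars_sum in_vars_mult in_vars_pconst in_vars_mvar) auto
  have coef0: "(\<Sum>i<n. w i * P i k) = 0" if k: "k < n" for k
  proof -
    have "of_int (\<Sum>i<n. w i * P i k) = (\<Sum>i<n. of_int N * v i * of_int (P i k) :: rat)"
      using w by simp
    also have "\<dots> = of_int N * psiV n P v k"
      by (simp add: psiV_def sum_distrib_left mult_ac)
    also have "\<dots> = 0" using h k by simp
    finally show ?thesis by (simp only: of_int_eq_0_iff)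
  qed
  have "psubst (lin_img n P) p = (\<Sum>i<n. pconst (w i) * lin_img n P i)"
    by (simp add: p_def psubst_sum psubst_lin)
  also have "\<dots> = (\<Sum>i<n. \<Sum>k<n. pconst (w i * P i k) * mvar k)"
    by (simp add: lin_img_def sum_distrib_left pconst_mult mult.assoc)
  also have "\<dots> = (\<Sum>k<n. \<Sum>i<n. pconst (w i * P i k) * mvar k)"
    by (rule sum.swap)
  also have "\<dots> = (\<Sum>k<n. pconst (\<Sum>i<n. w i * P i k) * mvar k)"
    by (simp add: pconst_sum sum_distrib_right)
  also have "\<dots> = 0" by (simp add: coef0)
  finally have ps: "psubst (lin_img n P) p = 0" .
  have "hcong n B (psubst (lin_img n P) p) (psubst (lin_img n P) 0)"
    unfolding hcong_def ps by (simp add: zero_in_ideal)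
  then have "hcong n A p 0" using iso pv unfolding bott_graded_iso_def by auto
  then have pI: "p \<in> bott_ideal n A" by (simp add: hcong_def)
  have evp: "ev z p = (\<Sum>i<n. of_int (w i) * z i)" for z
    by (simp add: p_def ev_sum ev_mult)
  have ev0: "ev z p = 0" for z
    by (rule ideal_lin[OF pI]) (simp add: evp sum_distrib_left mult_ac)
  show ?thesis
  proof (intro allI impI)
    fix i assume i: "i < n"
    have "ev (\<lambda>k. if k = i then 1 else 0) p = of_int (w i)"
      using i by (simp add: evp if_distrib cong: if_cong)
    then have "of_int (w i) = (0::rat)" using ev0 by simp
    then have "of_int N * v i = 0" using w i by simp
    then show "v i = 0" using N by simp
  qed
qed

definition lf :: "nat \<Rightarrow> (nat \<Rightarrow> rat) \<Rightarrow> (nat \<Rightarrow> rat) \<Rightarrow> rat" where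
  "lf n v z = (\<Sum>k<n. v k * z k)"

definition ind :: "nat set \<Rightarrow> nat \<Rightarrow> rat" where
  "ind S = (\<lambda>i. if i \<in> S then 1 else 0)"

lemma lf_ind: "S \<subseteq> {..<n} \<Longrightarrow> lf n u (ind S) = (\<Sum>i\<in>S. u i)"
  unfolding lf_def ind_def
  by (simp add: if_distrib sum.If_cases Int_absorb1 cong: if_cong)

lemma relv_out: "z k = 0 \<Longrightarrow> relv B k z = 0"
  by (simp add: relv_def)

lemma relsum_ind:
  assumes "S \<subseteq> {..<n}"
  shows "(\<Sum>k<n. c k * relv B k (ind S)) = (\<Sum>k\<in>S. c k * relv B k (ind S))"
  by (rule sum.mono_neutral_right) (use assms in \<open>auto simp: relv_out ind_def\<close>)

lemma relv_ind_single: "relv B p (ind {p}) = 1"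
  by (simp add: relv_def ind_def)

lemma relv_ind_pair_hi:
  assumes "k < L" shows "relv B L (ind {L, k}) = 1 - of_int (B k L)"
proof -
  have "(\<Sum>i<L. of_int (B i L) * ind {L, k} i) = (\<Sum>i\<in>{k}. of_int (B i L) * ind {L,k} i)"
    by (rule sum.mono_neutral_right) (use assms in \<open>auto simp: ind_def\<close>)
  then show ?thesis using assms by (simp add: relv_def ind_def)
qed

lemma relv_ind_pair_lo:
  assumes "k < L" shows "relv B k (ind {L, k}) = 1"
proof -
  have "(\<Sum>i<k. of_int (B i k) * ind {L, k} i) = 0"
    by (rule sum.neutral) (use assms in \<open>auto simp: ind_def\<close>)
  then show ?thesis using assms by (simp add: relv_def ind_def)
qed

lemma descent:
  fixes u v c :: "nat \<Rightarrow> rat"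
  assumes L: "L < n" and uL: "u L \<noteq> 0"
    and u0: "\<And>k. L < k \<Longrightarrow> k < n \<Longrightarrow> u k = 0"
    and v0: "\<And>k. L \<le> k \<Longrightarrow> k < n \<Longrightarrow> v k = 0"
    and idt: "\<And>z. (lf n u z)^2 - (lf n v z)^2 = (\<Sum>k<n. c k * relv B k z)"
  shows "\<forall>k<n. u k = u L * yV B L k"
proof -
  have single: "(u p)^2 - (v p)^2 = c p" if "p < n" for p
  proof -
    have "{p} \<subseteq> {..<n}" using that by simp
    from idt[of "ind {p}"] show ?thesis
      by (simp add: lf_ind[OF \<open>{p} \<subseteq> {..<n}\<close>] relsum_ind[OF \<open>{p} \<subseteq> {..<n}\<close>] relv_ind_single)
  qed
  have cL: "c L = (u L)^2" using single[OF L] v0[of L] L by simp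
  show ?thesis
  proof (intro allI impI)
    fix k assume k: "k < n"
    consider "k < L" | "k = L" | "L < k" by linarith
    then show "u k = u L * yV B L k"
    proof cases
      case 1
      have S: "{L, k} \<subseteq> {..<n}" using k L by simp
      have kL: "k \<noteq> L" using 1 by simp
      have "(u L + u k)^2 - (v L + v k)^2 = c L * (1 - of_int (B k L)) + c k"
        using idt[of "ind {L,k}"] kL
        by (simp add: lf_ind[OF S] relsum_ind[OF S] relv_ind_pair_hi[OF 1] relv_ind_pair_lo[OF 1])
      moreover have "(u k)^2 - (v k)^2 = c k" using single k by simp
      moreover have "v L = 0" using v0 L by simp
      ultimately have "2 * u L * u k = - ((u L)^2 * of_int (B k L))"
        using cL by (simp add: power2_eq_square algebra_simps)
      then have "u L * (2 * u k) = u L * (- (u L * of_int (B k L)))"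
        by (simp add: power2_eq_square algebra_simps)
      then have "2 * u k = - (u L * of_int (B k L))" using mult_left_cancel[OF uL] by blast
      then have "u k = - u L * of_int (B k L) / 2" by simp
      then show ?thesis using 1 by (simp add: yV_def alphaV_def)
    next
      case 2 then show ?thesis by (simp add: yV_def alphaV_def)
    next
      case 3 then show ?thesis using u0 k by (simp add: yV_def alphaV_def)
    qed
  qed
qed

lemma psiV_lin: "psiV n P (\<lambda>k. a * x k + b * y k) k' = a * psiV n P x k' + b * psiV n P y k'"
  by (simp add: psiV_def sum.distrib sum_distrib_left algebra_simps)

lemma psiV_diff_scale: "psiV n P (\<lambda>k. x k - a * y k) k' = psiV n P x k' - a * psiV n P y k'"
  by (simp add: psiV_def sum_subtractf sum_distrib_left algebra_simps)

lemma sum_delta_mult: "i < (n::nat) \<Longrightarrow> (\<Sum>k<n. (if k = i then 1 else 0) * f k) = (f i :: 'a::comm_ring_1)"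
proof -
  assume i: "i < n"
  have "(\<Sum>k<n. (if k = i then 1 else 0) * f k) = (\<Sum>k<n. if k = i then f k else 0)"
    by (rule sum.cong) auto
  also have "\<dots> = f i" using i by (subst sum.delta) auto
  finally show ?thesis .
qed

lemma sum_below: "k \<le> (n::nat) \<Longrightarrow> (\<Sum>i<n. (if i < k then f i else 0)) = (\<Sum>i<k. f i :: 'a::comm_monoid_add)"
proof -
  assume k: "k \<le> n"
  have "(\<Sum>i<n. (if i < k then f i else 0)) = (\<Sum>i<k. (if i < k then f i else 0))"
    using k by (intro sum.mono_neutral_right) auto
  also have "\<dots> = (\<Sum>i<k. f i)" by (rule sum.cong) auto
  finally show ?thesis .
qed

lemma psiV_ej: "i < n \<Longrightarrow> psiV n P (\<lambda>k. if k = i then 1 else 0) k' = of_int (P i k')"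
  unfolding psiV_def by (rule sum_delta_mult)

lemma lf_alphaV: "k \<le> n \<Longrightarrow> lf n (alphaV B k) z = (\<Sum>i<k. of_int (B i k) * z i)"
proof -
  assume k: "k \<le> n"
  have "lf n (alphaV B k) z = (\<Sum>i<n. (if i < k then of_int (B i k) * z i else 0))"
    unfolding lf_def alphaV_def by (rule sum.cong) auto
  also have "\<dots> = (\<Sum>i<k. of_int (B i k) * z i)" by (rule sum_below[OF k])
  finally show ?thesis .
qed

lemma lf_yV: "k < n \<Longrightarrow> lf n (yV B k) z = z k - lf n (alphaV B k) z / 2"
proof -
  assume k: "k < n"
  have "lf n (yV B k) z = (\<Sum>i<n. (if i = k then 1 else 0) * z i) - (\<Sum>i<n. alphaV B k i * z i) / 2"
    unfolding lf_def yV_def by (simp add: left_diff_distrib sum_subtractf sum_divide_distrib)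
  also have "\<dots> = z k - lf n (alphaV B k) z / 2"
    using k by (simp add: sum_delta_mult lf_def)
  finally show ?thesis .
qed

lemma yV_sq: "k < n \<Longrightarrow> (lf n (yV B k) z)^2 = relv B k z + (lf n (alphaV B k) z / 2)^2"
  by (simp add: lf_yV relv_def lf_alphaV power2_eq_square algebra_simps)

lemma lf_cong: "(\<And>k. k < n \<Longrightarrow> u k = w k) \<Longrightarrow> lf n u z = lf n w z"
  unfolding lf_def by (rule sum.cong) auto

lemma lf_scale: "lf n (\<lambda>k. a * u k) z = a * lf n u z"
  by (simp add: lf_def sum_distrib_left mult_ac)

lemma lf_half: "lf n (\<lambda>k. u k / 2) z = lf n u z / 2"
  by (simp add: lf_def sum_divide_distrib)

lemma sum_ind_single: "m < n \<Longrightarrow> (\<Sum>k<n. ind {m} k * f k) = f m"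
  unfolding ind_def singleton_iff by (rule sum_delta_mult)

lemma odd_div4: "odd (b::int) \<Longrightarrow> a * b = 4 \<Longrightarrow> b = 1 \<or> b = -1"
proof -
  assume ob: "odd b" and ab: "a * b = 4"
  have "b dvd 4" using ab by (metis dvd_triv_right)
  then have "\<bar>b\<bar> \<le> 4" using dvd_imp_le_int[of 4 b] by simp
  then have "b \<in> {-4..4}" by auto
  then have "b \<in> {-4,-3,-2,-1,0,1,2,3,4}" by auto
  with ob ab show ?thesis by auto presburger+
qed

theorem lemma4p4:
  fixes n :: nat and A B P :: "nat \<Rightarrow> nat \<Rightarrow> int" and \<sigma> :: "nat \<Rightarrow> nat"
    and q :: "nat \<Rightarrow> rat" and j :: nat
  assumes "su_matrix n A" and "su_matrix n B"
    and "bott_graded_iso n A B P"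
    and "\<sigma> permutes {..<n}"
    and "\<forall>l<n. q l \<noteq> 0"
    and "\<forall>l<n. eqV n (psiV n P (yV A l)) (scaleV (q l) (yV B (\<sigma> l)))"
    and "j < n" and "q j = 1/2 \<or> q j = -1/2"
  shows "\<exists>i c. exc_with n A j c i \<and>
           (\<not> even_exceptional n A j \<longrightarrow> odd c \<and> (q i = 2 \<or> q i = -2)) \<and>
           (\<not> even_exceptional n A j \<and> \<not> even_exceptional n B (\<sigma> i) \<longrightarrow>
              (\<exists>d::int. odd d \<and> eqV n (alphaV B (\<sigma> i)) (scaleV (of_int d) (yV B (\<sigma> j)))))"
proof -
  note iso = assms(3) and perm = assms(4) and qnz = assms(5) and jn = assms(7) and qj = assms(8)
  have H: "\<And>l k. l < n \<Longrightarrow> k < n \<Longrightarrow> psiV n P (yV A l) k = q l * yV B (\<sigma> l) k"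
    using assms(6) by (simp add: eqV_def scaleV_def)
  define m where "m = \<sigma> j"
  have mn: "m < n" using permutes_in_image[OF perm, of j] jn by (simp add: m_def)
  have qj2: "q j * q j = 1/4"
  proof (cases "q j = 1/2")
    case True then show ?thesis by (simp add: True)
  next
    case False then have e: "q j = -1/2" using qj by blast
    show ?thesis by (simp add: e)
  qed
  define Tv where "Tv = psiV n P (alphaV A j)"
  define TI where "TI k = (\<Sum>i<n. (if i < j then A i j else 0) * P i k)" for k
  have TvI: "Tv k = of_int (TI k)" for k
    unfolding Tv_def TI_def psiV_def alphaV_def of_int_sum by (rule sum.cong) auto
  have V1: "of_int (P j k) = q j * yV B m k + Tv k / 2" if k: "k < n" for k
  proof -
    have "of_int (P j k) = psiV n P (\<lambda>i. if i = j then 1 else 0) k"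
      using jn by (simp add: psiV_ej)
    also have "(\<lambda>i. if i = j then (1::rat) else 0) = (\<lambda>i. 1 * yV A j i + (1/2) * alphaV A j i)"
      by (auto simp: yV_def)
    also have "psiV n P \<dots> k = psiV n P (yV A j) k + (1/2) * Tv k"
      unfolding psiV_lin Tv_def by simp
    finally show ?thesis using H[OF jn k] by (simp add: m_def)
  qed
  define lz where "lz z = (\<lambda>i. ev z (lin_img n P i))" for z
  have lf_psiV: "lf n (psiV n P v) z = (\<Sum>i<n. v i * lz z i)" for v z
    unfolding lf_def psiV_def lz_def ev_lin_img
    by (simp add: sum_distrib_left sum_distrib_right mult_ac) (rule sum.swap)
  have relA: "bott_rel A j \<in> bott_ideal n A"
  proof -
    have e: "bott_rel A j = (\<Sum>k<n. (if k = j then 1 else 0) * bott_rel A k)"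
      using jn by (simp add: sum_delta_mult)
    have iv: "\<forall>k<n. in_vars n (if k = j then 1 else 0)"
      by (simp add: in_vars_def)
    show ?thesis unfolding bott_ideal_def
      by (rule CollectI, rule exI[of _ "\<lambda>k. if k = j then 1 else 0"]) (use e iv in blast)
  qed
  have relv_in: "in_vars n (bott_rel A j)" unfolding bott_rel_def
    using jn by (intro in_vars_diff in_vars_mult in_vars_mvar in_vars_alphaP) auto
  define E where "E = psubst (lin_img n P) (bott_rel A j)"
  have EI: "E \<in> bott_ideal n B"
  proof -
    have "hcong n A (bott_rel A j) 0" using relA by (simp add: hcong_def)
    moreover have "\<forall>p q. in_vars n p \<longrightarrow> in_vars n q \<longrightarrow>
        (hcong n A p q \<longleftrightarrow> hcong n B (psubst (lin_img n P) p) (psubst (lin_img n P) q))"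
      using iso unfolding bott_graded_iso_def by (elim conjE)
    ultimately have "hcong n B E (psubst (lin_img n P) 0)"
      using relv_in unfolding E_def by simp
    then show ?thesis by (simp add: hcong_def)
  qed
  have evE: "ev z E = relv A j (lz z)" for z
    by (simp add: E_def ev_psubst' ev_bott_rel lz_def)
  have lz_scale: "lz (\<lambda>i. t * z i) = (\<lambda>i. t * lz z i)" for t z
    by (simp add: lz_def ev_lin_img sum_distrib_left mult_ac)
  obtain c where c: "\<And>z. ev z E = (\<Sum>k<n. c k * relv B k z)"
  proof -
    have "ev (\<lambda>i. t * z i) E = t^2 * ev z E" for t z
      unfolding evE lz_scale by (rule relv_scale)
    from ideal_quad[OF EI this] show ?thesis using that by blast
  qed
  have quad1: "(lf n Tv z)^2 - (lf n (\<lambda>k. alphaV B m k / 2) z)^2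
      = (\<Sum>k<n. (ind {m} k - 4 * c k) * relv B k z)" for z
  proof -
    define T where "T = lf n Tv z"
    define Y where "Y = lf n (yV B m) z"
    define al where "al = lf n (\<lambda>k. alphaV B m k / 2) z"
    have lzj: "lz z j = q j * Y + T / 2"
    proof -
      have "lz z j = (\<Sum>k<n. of_int (P j k) * z k)" by (simp add: lz_def ev_lin_img)
      also have "\<dots> = (\<Sum>k<n. (q j * yV B m k + Tv k / 2) * z k)"
        by (rule sum.cong) (simp_all add: V1)
      also have "\<dots> = q j * Y + T / 2"
        by (simp add: Y_def T_def lf_def algebra_simps sum.distrib sum_distrib_left sum_divide_distrib)
      finally show ?thesis .
    qed
    have sA: "(\<Sum>i<j. of_int (A i j) * lz z i) = T"
    proof -
      have "T = (\<Sum>i<n. alphaV A j i * lz z i)" by (simp add: T_def Tv_def lf_psiV)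
      also have "\<dots> = (\<Sum>i<n. if i < j then of_int (A i j) * lz z i else 0)"
        by (rule sum.cong) (auto simp: alphaV_def)
      also have "\<dots> = (\<Sum>i<j. of_int (A i j) * lz z i)" using jn by (simp add: sum_below)
      finally show ?thesis by simp
    qed
    have "(\<Sum>k<n. c k * relv B k z) = relv A j (lz z)" using c[of z] evE[of z] by simp
    also have "\<dots> = q j * q j * Y^2 - T^2 / 4"
      unfolding relv_def sA lzj by (simp add: power2_eq_square algebra_simps)
    finally have R: "(\<Sum>k<n. c k * relv B k z) = q j * q j * Y^2 - T^2 / 4" .
    have Y2: "Y^2 = relv B m z + al^2"
      unfolding Y_def al_def lf_half using yV_sq[OF mn] by simp
    have "(\<Sum>k<n. (ind {m} k - 4 * c k) * relv B k z) = relv B m z - 4 * (\<Sum>k<n. c k * relv B k z)"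
    proof -
      have "(\<Sum>k<n. (ind {m} k - 4 * c k) * relv B k z) = (\<Sum>k<n. ind {m} k * relv B k z) - (\<Sum>k<n. 4 * (c k * relv B k z))"
        by (simp add: left_diff_distrib sum_subtractf mult.assoc)
      also have "\<dots> = relv B m z - 4 * (\<Sum>k<n. c k * relv B k z)"
        by (simp only: sum_ind_single[OF mn] sum_distrib_left)
      finally show ?thesis .
    qed
    also have "\<dots> = T^2 - al^2" unfolding R qj2 Y2 by (simp add: field_simps)
    finally show ?thesis by (simp add: T_def al_def)
  qed
  have yBmm: "yV B m m = 1" by (simp add: yV_def alphaV_def)
  have Tvm: "Tv m \<noteq> 0"
  proof
    assume "Tv m = 0"
    then have e: "of_int (P j m) = q j" using V1[OF mn] yBmm by simp
    show False using qj
    proof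
      assume "q j = 1/2"
      then have "of_int (2 * P j m) = (1::rat)" using e by simp
      then have "2 * P j m = 1" by (simp only: of_int_eq_1_iff)
      then show False by presburger
    next
      assume "q j = -1/2"
      then have "of_int (2 * P j m) = (-1::rat)" using e by simp
      then have "2 * P j m = -1" by (metis of_int_eq_iff of_int_minus of_int_1)
      then show False by presburger
    qed
  qed
  define Ls where "Ls = {k. k < n \<and> Tv k \<noteq> 0}"
  have finLs: "finite Ls" unfolding Ls_def by simp
  have mLs: "m \<in> Ls" unfolding Ls_def using mn Tvm by simp
  define L where "L = Max Ls"
  have LLs: "L \<in> Ls" unfolding L_def using finLs mLs by (intro Max_in) auto
  have Ln: "L < n" and TvL: "Tv L \<noteq> 0" using LLs by (auto simp: Ls_def)
  have mL: "m \<le> L" unfolding L_def using finLs mLs by simp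
  have Lmax: "Tv k = 0" if "L < k" "k < n" for k
  proof (rule ccontr)
    assume "Tv k \<noteq> 0"
    then have "k \<in> Ls" using that by (simp add: Ls_def)
    then have "k \<le> L" unfolding L_def using finLs by simp
    then show False using that by simp
  qed
  have D1: "\<forall>k<n. Tv k = Tv L * yV B L k"
  proof (rule descent[where u=Tv and L=L and n=n and B=B and v="\<lambda>k. alphaV B m k / 2" and c="\<lambda>k. ind {m} k - 4 * c k", OF Ln TvL])
    show "\<And>k. L < k \<Longrightarrow> k < n \<Longrightarrow> Tv k = 0" by (rule Lmax)
    show "\<And>k. L \<le> k \<Longrightarrow> k < n \<Longrightarrow> alphaV B m k / 2 = 0" using mL by (simp add: alphaV_def)
    show "\<And>z. (lf n Tv z)^2 - (lf n (\<lambda>k. alphaV B m k / 2) z)^2 = (\<Sum>k<n. (ind {m} k - 4 * c k) * relv B k z)"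
      by (rule quad1)
  qed
  define t where "t = Tv L"
  have tnz: "t \<noteq> 0" using TvL by (simp add: t_def)
  define i where "i = inv \<sigma> L"
  have si: "\<sigma> i = L" using permutes_inverses(1)[OF perm] by (simp add: i_def)
  have iin: "i < n" using permutes_in_image[OF permutes_inv[OF perm], of L] Ln by (simp add: i_def)
  have qinz: "q i \<noteq> 0" using qnz iin by simp
  have Aeq: "\<forall>k<n. alphaV A j k - (t / q i) * yV A i k = 0"
  proof (rule inj_vec[OF iso], intro allI impI)
    fix k assume k: "k < n"
    have "psiV n P (\<lambda>k. alphaV A j k - (t / q i) * yV A i k) k = Tv k - (t / q i) * (q i * yV B L k)"
      unfolding psiV_diff_scale Tv_def using H[OF iin k] si by simp
    also have "\<dots> = 0" using D1 k qinz by (simp add: t_def)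
    finally show "psiV n P (\<lambda>k. alphaV A j k - (t / q i) * yV A i k) k = 0" .
  qed
  have yii: "yV A i i = 1" by (simp add: yV_def alphaV_def)
  have aji: "alphaV A j i = t / q i" using Aeq iin yii by auto
  have tqnz: "t / q i \<noteq> 0" using tnz qinz by simp
  have ij: "i < j"
  proof (rule ccontr)
    assume "\<not> i < j"
    then have "alphaV A j i = 0" by (simp add: alphaV_def)
    then show False using aji tqnz by simp
  qed
  define cc where "cc = A i j"
  have ccq: "of_int cc = t / q i" using aji ij by (simp add: alphaV_def cc_def)
  have ccnz: "cc \<noteq> 0" using ccq tqnz by auto
  have exc: "exc_with n A j cc i"
    unfolding exc_with_def eqV_def scaleV_def using ij ccnz Aeq ccq by auto
  have Lm: "L \<noteq> m"
  proof
    assume "L = m"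
    then have "\<sigma> i = \<sigma> j" using si by (simp add: m_def)
    then have "i = j" using permutes_inj[OF perm] by (simp add: inj_eq)
    then show False using ij by simp
  qed
  have mlL: "m < L" using mL Lm by simp
  have yBmL: "yV B m L = 0" using Lm mlL by (simp add: yV_def alphaV_def)
  have yBLm: "yV B L m = - of_int (B m L) / 2" using mlL by (simp add: yV_def alphaV_def)
  have tP: "t = 2 * of_int (P j L)" using V1[OF Ln] yBmL by (simp add: t_def)
  have oddPB: "odd (P j L * B m L)"
  proof -
    have Tvm': "Tv m = - of_int (P j L * B m L)" using D1 mn yBLm tP by (simp add: t_def)
    have e: "2 * q j = of_int (2 * P j m + P j L * B m L)"
      using V1[OF mn] yBmm Tvm' by simp
    show ?thesis using qj
    proof
      assume "q j = 1/2"
      then have "of_int (2 * P j m + P j L * B m L) = (1::rat)" using e by simp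
      then have "2 * P j m + P j L * B m L = 1" by (simp only: of_int_eq_1_iff)
      then show ?thesis by (metis dvd_triv_left even_add odd_one)
    next
      assume "q j = -1/2"
      then have "of_int (2 * P j m + P j L * B m L) = (-1::rat)" using e by simp
      then have "2 * P j m + P j L * B m L = -1" by (metis of_int_eq_iff of_int_minus of_int_1)
      then show ?thesis by (metis dvd_triv_left even_add odd_one even_minus)
    qed
  qed
  have oddPjL: "odd (P j L)" and oddBmL: "odd (B m L)" using oddPB by auto
  have part2: "\<not> even_exceptional n A j \<longrightarrow> odd cc \<and> (q i = 2 \<or> q i = -2)"
  proof
    assume nA: "\<not> even_exceptional n A j"
    have oddc: "odd cc" using nA exc unfolding even_exceptional_def by blast
    define a2 where "a2 = (\<Sum>k<n. (2 * (if k = i then 1 else 0) - (if k < i then A k i else 0)) * P k L)"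
    have a2q: "2 * q i = of_int a2"
    proof -
      have "2 * q i = 2 * psiV n P (yV A i) L" using H[OF iin Ln] si by (simp add: yV_def alphaV_def)
      also have "\<dots> = psiV n P (\<lambda>k. 2 * yV A i k) L" by (simp add: psiV_def sum_distrib_left mult_ac)
      also have "\<dots> = of_int a2" unfolding psiV_def a2_def yV_def alphaV_def of_int_sum
        by (rule sum.cong) auto
      finally show ?thesis .
    qed
    obtain u where u: "\<forall>k'<n. psiV n P (\<lambda>k. of_int (u k)) k' = 2 * yV B L k'"
      using surj_vec[OF iso Ln] by blast
    have ueq: "\<forall>k<n. of_int (u k) - (2 / q i) * yV A i k = 0"
    proof (rule inj_vec[OF iso], intro allI impI)
      fix k assume k: "k < n"
      have "psiV n P (\<lambda>k. of_int (u k) - (2 / q i) * yV A i k) k = 2 * yV B L k - (2 / q i) * (q i * yV B L k)"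
        unfolding psiV_diff_scale using H[OF iin k] si u k by simp
      also have "\<dots> = 0" using qinz by simp
      finally show "psiV n P (\<lambda>k. of_int (u k) - (2 / q i) * yV A i k) k = 0" .
    qed
    have ui: "of_int (u i) = 2 / q i" using ueq iin yii by auto
    have "of_int (a2 * u i) = (4::rat)" using a2q ui qinz by (simp add: a2q[symmetric])
    then have a2u: "a2 * u i = 4" by (metis of_int_eq_iff of_int_numeral)
    have "of_int cc = (of_int (P j L * u i) :: rat)"
      using ccq tP ui by simp
    then have "cc = P j L * u i" by (simp only: of_int_eq_iff)
    then have "odd (u i)" using oddc by simp
    then have "u i = 1 \<or> u i = -1" using a2u odd_div4 by blast
    then have "q i = 2 \<or> q i = -2" using ui qinz by (auto simp: field_simps)
    then show "odd cc \<and> (q i = 2 \<or> q i = -2)" using oddc by simp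
  qed
  have part3: "\<not> even_exceptional n A j \<and> \<not> even_exceptional n B (\<sigma> i) \<longrightarrow>
      (\<exists>d::int. odd d \<and> eqV n (alphaV B (\<sigma> i)) (scaleV (of_int d) (yV B (\<sigma> j))))"
  proof
    assume "\<not> even_exceptional n A j \<and> \<not> even_exceptional n B (\<sigma> i)"
    then have nB: "\<not> even_exceptional n B L" using si by simp
    define u' where "u' = (\<lambda>k. t * (alphaV B L k / 2))"
    have quad2: "(lf n u' z)^2 - (lf n (\<lambda>k. alphaV B m k / 2) z)^2
       = (\<Sum>k<n. ((ind {m} k - 4 * c k) - t^2 * ind {L} k) * relv B k z)" for z
    proof -
      have lfT: "lf n Tv z = t * lf n (yV B L) z"
        using lf_cong[of n Tv "\<lambda>k. t * yV B L k" z] D1 lf_scale by (simp add: t_def)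
      have "(\<Sum>k<n. ((ind {m} k - 4 * c k) - t^2 * ind {L} k) * relv B k z)
          = (\<Sum>k<n. (ind {m} k - 4 * c k) * relv B k z) - t^2 * (\<Sum>k<n. ind {L} k * relv B k z)"
        by (simp add: left_diff_distrib sum_subtractf sum_distrib_left mult.assoc)
      also have "\<dots> = (lf n Tv z)^2 - (lf n (\<lambda>k. alphaV B m k / 2) z)^2 - t^2 * relv B L z"
        by (simp only: quad1 sum_ind_single[OF Ln])
      also have "\<dots> = (lf n u' z)^2 - (lf n (\<lambda>k. alphaV B m k / 2) z)^2"
        unfolding lfT u'_def lf_scale lf_half power_mult_distrib yV_sq[OF Ln] by (simp add: algebra_simps)
      finally show ?thesis by simp
    qed
    define Ms where "Ms = {k. k < n \<and> alphaV B L k \<noteq> 0}"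
    have finMs: "finite Ms" unfolding Ms_def by simp
    have BmL: "B m L \<noteq> 0" using oddBmL by auto
    have mMs: "m \<in> Ms" unfolding Ms_def using mn mlL BmL by (simp add: alphaV_def)
    define M1 where "M1 = Max Ms"
    have M1Ms: "M1 \<in> Ms" unfolding M1_def using finMs mMs by (intro Max_in) auto
    have M1n: "M1 < n" and aM1: "alphaV B L M1 \<noteq> 0" using M1Ms by (auto simp: Ms_def)
    have M1L: "M1 < L" using aM1 by (simp add: alphaV_def split: if_splits)
    have mM1: "m \<le> M1" unfolding M1_def using finMs mMs by simp
    have Mmax: "alphaV B L k = 0" if "M1 < k" "k < n" for k
    proof (rule ccontr)
      assume "alphaV B L k \<noteq> 0"
      then have "k \<in> Ms" using that by (simp add: Ms_def)
      then have "k \<le> M1" unfolding M1_def using finMs by simp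
      then show False using that by simp
    qed
    have u'M1: "u' M1 \<noteq> 0" using tnz aM1 by (simp add: u'_def)
    have D2: "\<forall>k<n. u' k = u' M1 * yV B M1 k"
    proof (rule descent[where u=u' and L=M1 and n=n and B=B and v="\<lambda>k. alphaV B m k / 2"
          and c="\<lambda>k. (ind {m} k - 4 * c k) - t^2 * ind {L} k", OF M1n u'M1])
      show "\<And>k. M1 < k \<Longrightarrow> k < n \<Longrightarrow> u' k = 0" using Mmax by (simp add: u'_def)
      show "\<And>k. M1 \<le> k \<Longrightarrow> k < n \<Longrightarrow> alphaV B m k / 2 = 0" using mM1 by (simp add: alphaV_def)
      show "\<And>z. (lf n u' z)^2 - (lf n (\<lambda>k. alphaV B m k / 2) z)^2
         = (\<Sum>k<n. ((ind {m} k - 4 * c k) - t^2 * ind {L} k) * relv B k z)"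
        by (rule quad2)
    qed
    define d1 where "d1 = B M1 L"
    have ad1: "alphaV B L M1 = of_int d1" using M1L by (simp add: alphaV_def d1_def)
    have d1nz: "d1 \<noteq> 0" using aM1 ad1 by simp
    have aeq: "\<forall>k<n. alphaV B L k = of_int d1 * yV B M1 k"
    proof (intro allI impI)
      fix k assume k: "k < n"
      have "t * (alphaV B L k / 2) = t * (of_int d1 * yV B M1 k / 2)"
        using D2 k ad1 by (simp add: u'_def)
      then show "alphaV B L k = of_int d1 * yV B M1 k" using tnz by simp
    qed
    have excB: "exc_with n B L d1 M1"
      unfolding exc_with_def eqV_def scaleV_def using M1L d1nz aeq by auto
    have oddd1: "odd d1" using nB excB unfolding even_exceptional_def by blast
    have M1m: "M1 = m"
    proof (rule ccontr)
      assume ne: "M1 \<noteq> m"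
      then have mlM1: "m < M1" using mM1 by simp
      have y1: "yV B m M1 = 0" using ne mlM1 by (simp add: yV_def alphaV_def)
      have y2: "yV B L M1 = - of_int d1 / 2" using M1L by (simp add: yV_def alphaV_def d1_def)
      have "of_int (P j M1) = Tv M1 / 2" using V1[OF M1n] y1 by simp
      also have "\<dots> = t * (- of_int d1 / 2) / 2" using D1 M1n y2 by (simp add: t_def)
      finally have "of_int (2 * P j M1) = (of_int (- (P j L * d1)) :: rat)" using tP by simp
      then have "2 * P j M1 = - (P j L * d1)" by (simp only: of_int_eq_iff)
      then have "even (P j L * d1)" by (metis dvd_triv_left even_minus)
      then show False using oddPjL oddd1 by simp
    qed
    show "\<exists>d::int. odd d \<and> eqV n (alphaV B (\<sigma> i)) (scaleV (of_int d) (yV B (\<sigma> j)))"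
      using oddd1 aeq M1m si unfolding eqV_def scaleV_def m_def by auto
  qed
  show ?thesis using exc part2 part3 by blast
qed

end
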